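(* There exists a sequence $(G_n)_{n\in\mathbb{N}}$ of graphs such that $|V(G_n)|=n$ for all $n$, $R_2(G_n)=O(n)$ and $R_3(G_n)=\Omega(n\log n)$.
   Context: For a graph $G$ and integer $r\geqslant 2$, the $r$-colour Ramsey number $R_r(G)$ is the smallest integer $N$ such that every colouring of the edges of the complete graph $K_N$ with $r$ colours contains a copy of $G$ all of whose edges have the same colour. *)

theory Defs
  imports Main "HOL-Library.Landau_Symbols"
begin

definition simple_graph :: "nat \<Rightarrow> nat set set \<Rightarrow> bool" where
  "simple_graph n E \<longleftrightarrow> (\<forall>e\<in>E. e \<subseteq> {0..<n} \<and> card e = 2)"

definition edge_colouring :: "nat \<Rightarrow> nat \<Rightarrow> (nat set \<Rightarrow> nat) \<Rightarrow> bool" where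
  "edge_colouring r N \<chi> \<longleftrightarrow> (\<forall>e. e \<subseteq> {0..<N} \<and> card e = 2 \<longrightarrow> \<chi> e < r)"

definition has_mono_copy :: "nat \<Rightarrow> (nat set \<Rightarrow> nat) \<Rightarrow> nat \<Rightarrow> nat set set \<Rightarrow> bool" where
  "has_mono_copy N \<chi> n E \<longleftrightarrow>
     (\<exists>f c. inj_on f {0..<n} \<and> f ` {0..<n} \<subseteq> {0..<N} \<and> (\<forall>e\<in>E. \<chi> (f ` e) = c))"

definition ramsey_arrow :: "nat \<Rightarrow> nat \<Rightarrow> nat \<Rightarrow> nat set set \<Rightarrow> bool" where
  "ramsey_arrow r N n E \<longleftrightarrow> (\<forall>\<chi>. edge_colouring r N \<chi> \<longrightarrow> has_mono_copy N \<chi> n E)"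

definition ramsey_number :: "nat \<Rightarrow> nat \<Rightarrow> nat set set \<Rightarrow> nat" where
  "ramsey_number r n E = (LEAST N. ramsey_arrow r N n E)"

end

theory Submission
  imports Defs
begin

lemma ramsey2:
  fixes P :: "nat set \<Rightarrow> bool"
  shows "finite X \<Longrightarrow> card X \<ge> 2^(a+b) \<Longrightarrow>
    (\<exists>K\<subseteq>X. card K = a \<and> (\<forall>u\<in>K. \<forall>w\<in>K. u\<noteq>w \<longrightarrow> P{u,w})) \<or>
    (\<exists>K\<subseteq>X. card K = b \<and> (\<forall>u\<in>K. \<forall>w\<in>K. u\<noteq>w \<longrightarrow> \<not> P{u,w}))"
proof (induction "a+b" arbitrary: a b X)
  case 0
  then show ?case by auto
next
  case (Suc k)
  show ?case
  proof (cases "a = 0 \<or> b = 0")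
    case True
    then show ?thesis by (metis card.empty empty_iff empty_subsetI)
  next
    case False
    then have ab: "a > 0" "b > 0" by auto
    have "card X \<ge> 1" using Suc.prems by (metis one_le_numeral one_le_power le_trans)
    then obtain v where v: "v \<in> X" by fastforce
    define A where "A = {w\<in>X. w\<noteq>v \<and> P{v,w}}"
    define B where "B = {w\<in>X. w\<noteq>v \<and> \<not> P{v,w}}"
    have AB: "A \<union> B = X - {v}" "A \<inter> B = {}" unfolding A_def B_def by auto
    have fA: "finite A" "finite B" using Suc.prems(1) unfolding A_def B_def by auto
    have "card A + card B = card X - 1"
      using card_Un_disjoint[OF fA AB(2)] AB(1) v Suc.prems(1) by simp
    moreover have "2^(a+b) = 2 * (2::nat)^k" using Suc.hyps(2) by (metis power_Suc)
    ultimately have "card A \<ge> 2^k \<or> card B \<ge> 2^k" using Suc.prems(2) by linarith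
    then show ?thesis
    proof
      assume cA: "card A \<ge> 2^k"
      have "k = (a-1) + b" using Suc.hyps(2) ab by simp
      from Suc.hyps(1)[OF this fA(1)] cA have
        "(\<exists>K\<subseteq>A. card K = a-1 \<and> (\<forall>u\<in>K. \<forall>w\<in>K. u\<noteq>w \<longrightarrow> P{u,w})) \<or>
         (\<exists>K\<subseteq>A. card K = b \<and> (\<forall>u\<in>K. \<forall>w\<in>K. u\<noteq>w \<longrightarrow> \<not> P{u,w}))"
        using \<open>k = (a-1) + b\<close> by simp
      then show ?thesis
      proof
        assume "\<exists>K\<subseteq>A. card K = a-1 \<and> (\<forall>u\<in>K. \<forall>w\<in>K. u\<noteq>w \<longrightarrow> P{u,w})"
        then obtain K where K: "K \<subseteq> A" "card K = a-1" "\<forall>u\<in>K. \<forall>w\<in>K. u\<noteq>w \<longrightarrow> P{u,w}" by blast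
        have "v \<notin> K" using K(1) unfolding A_def by auto
        have fK: "finite K" using K(1) fA(1) finite_subset by blast
        have "insert v K \<subseteq> X" using K(1) v unfolding A_def by auto
        moreover have "card (insert v K) = a" using fK \<open>v \<notin> K\<close> K(2) ab by simp
        moreover have "\<forall>u\<in>insert v K. \<forall>w\<in>insert v K. u\<noteq>w \<longrightarrow> P{u,w}"
          using K(1,3) unfolding A_def by (auto simp: insert_commute)
        ultimately show ?thesis by blast
      next
        assume "\<exists>K\<subseteq>A. card K = b \<and> (\<forall>u\<in>K. \<forall>w\<in>K. u\<noteq>w \<longrightarrow> \<not> P{u,w})"
        then show ?thesis unfolding A_def by blast
      qed
    next
      assume cB: "card B \<ge> 2^k"
      have "k = a + (b-1)" using Suc.hyps(2) ab by simp
      from Suc.hyps(1)[OF this fA(2)] cB have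
        "(\<exists>K\<subseteq>B. card K = a \<and> (\<forall>u\<in>K. \<forall>w\<in>K. u\<noteq>w \<longrightarrow> P{u,w})) \<or>
         (\<exists>K\<subseteq>B. card K = b-1 \<and> (\<forall>u\<in>K. \<forall>w\<in>K. u\<noteq>w \<longrightarrow> \<not> P{u,w}))"
        using \<open>k = a + (b-1)\<close> by simp
      then show ?thesis
      proof
        assume "\<exists>K\<subseteq>B. card K = b-1 \<and> (\<forall>u\<in>K. \<forall>w\<in>K. u\<noteq>w \<longrightarrow> \<not> P{u,w})"
        then obtain K where K: "K \<subseteq> B" "card K = b-1" "\<forall>u\<in>K. \<forall>w\<in>K. u\<noteq>w \<longrightarrow> \<not> P{u,w}" by blast
        have "v \<notin> K" using K(1) unfolding B_def by auto
        have fK: "finite K" using K(1) fA(2) finite_subset by blast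
        have "insert v K \<subseteq> X" using K(1) v unfolding B_def by auto
        moreover have "card (insert v K) = b" using fK \<open>v \<notin> K\<close> K(2) ab by simp
        moreover have "\<forall>u\<in>insert v K. \<forall>w\<in>insert v K. u\<noteq>w \<longrightarrow> \<not> P{u,w}"
          using K(1,3) unfolding B_def by (auto simp: insert_commute)
        ultimately show ?thesis by blast
      next
        assume "\<exists>K\<subseteq>B. card K = a \<and> (\<forall>u\<in>K. \<forall>w\<in>K. u\<noteq>w \<longrightarrow> P{u,w})"
        then show ?thesis unfolding B_def by blast
      qed
    qed
  qed
qed

lemma greedy:
  fixes P :: "nat set \<Rightarrow> bool"
  shows "finite X \<Longrightarrow> card X \<ge> a*(D+1) \<Longrightarrow> (\<forall>v\<in>X. card {w\<in>X. w\<noteq>v \<and> \<not> P{v,w}} \<le> D) \<Longrightarrow>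
    \<exists>K\<subseteq>X. card K = a \<and> (\<forall>u\<in>K. \<forall>w\<in>K. u\<noteq>w \<longrightarrow> P{u,w})"
proof (induction a arbitrary: X)
  case 0
  then show ?case by auto
next
  case (Suc a)
  have "card X \<ge> 1" using Suc.prems(2) by simp
  then obtain v where v: "v \<in> X" by fastforce
  define A where "A = {w\<in>X. w\<noteq>v \<and> P{v,w}}"
  define B where "B = {w\<in>X. w\<noteq>v \<and> \<not> P{v,w}}"
  have AB: "A \<union> B = X - {v}" "A \<inter> B = {}" unfolding A_def B_def by auto
  have fA: "finite A" "finite B" using Suc.prems(1) unfolding A_def B_def by auto
  have "card A + card B = card X - 1"
    using card_Un_disjoint[OF fA AB(2)] AB(1) v Suc.prems(1) by simp
  moreover have "card B \<le> D" using Suc.prems(3) v unfolding B_def by auto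
  ultimately have cA: "card A \<ge> a*(D+1)" using Suc.prems(2) by simp
  have "\<forall>u\<in>A. card {w\<in>A. w\<noteq>u \<and> \<not> P{u,w}} \<le> D"
  proof
    fix u assume "u \<in> A"
    then have "u \<in> X" unfolding A_def by auto
    have "{w\<in>A. w\<noteq>u \<and> \<not> P{u,w}} \<subseteq> {w\<in>X. w\<noteq>u \<and> \<not> P{u,w}}" unfolding A_def by auto
    then have "card {w\<in>A. w\<noteq>u \<and> \<not> P{u,w}} \<le> card {w\<in>X. w\<noteq>u \<and> \<not> P{u,w}}"
      using Suc.prems(1) by (intro card_mono) auto
    then show "card {w\<in>A. w\<noteq>u \<and> \<not> P{u,w}} \<le> D" using Suc.prems(3) \<open>u\<in>X\<close> by fastforce
  qed
  from Suc.IH[OF fA(1) cA this] obtain K where K: "K \<subseteq> A" "card K = a" "\<forall>u\<in>K. \<forall>w\<in>K. u\<noteq>w \<longrightarrow> P{u,w}" by blast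
  have "v \<notin> K" using K(1) unfolding A_def by auto
  have fK: "finite K" using K(1) fA(1) finite_subset by blast
  have "insert v K \<subseteq> X" using K(1) v unfolding A_def by auto
  moreover have "card (insert v K) = Suc a" using fK \<open>v \<notin> K\<close> K(2) by simp
  moreover have "\<forall>u\<in>insert v K. \<forall>w\<in>insert v K. u\<noteq>w \<longrightarrow> P{u,w}"
    using K(1,3) unfolding A_def by (auto simp: insert_commute)
  ultimately show ?case by blast
qed

lemma arrow_mono:
  assumes "ramsey_arrow r N n E" "N \<le> M"
  shows "ramsey_arrow r M n E"
  unfolding ramsey_arrow_def
proof (intro allI impI)
  fix \<chi> assume "edge_colouring r M \<chi>"
  moreover have "{0..<N} \<subseteq> {0..<M}" using assms(2) by auto
  ultimately have "edge_colouring r N \<chi>" unfolding edge_colouring_def by blast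
  then have "has_mono_copy N \<chi> n E" using assms(1) unfolding ramsey_arrow_def by blast
  then obtain f c where fc: "inj_on f {0..<n}" "f ` {0..<n} \<subseteq> {0..<N}" "\<forall>e\<in>E. \<chi> (f ` e) = c"
    unfolding has_mono_copy_def by blast
  moreover have "{0..<N} \<subseteq> {0..<M}" using assms(2) by auto
  ultimately have "f ` {0..<n} \<subseteq> {0..<M}" by blast
  then show "has_mono_copy M \<chi> n E" unfolding has_mono_copy_def using fc(1,3) by (intro exI[of _ f] exI[of _ c]) simp
qed

lemma clique_copy:
  assumes "K \<subseteq> {0..<N}" "card K = n" "\<forall>u\<in>K. \<forall>w\<in>K. u\<noteq>w \<longrightarrow> \<chi>{u,w} = c"
    "simple_graph n E"
  shows "has_mono_copy N \<chi> n E"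
proof -
  have "finite K" using assms(1) finite_subset by blast
  then obtain h where h: "bij_betw h {0..<n} K" using ex_bij_betw_nat_finite assms(2) by blast
  have "\<forall>e\<in>E. \<chi> (h ` e) = c"
  proof
    fix e assume "e \<in> E"
    then have e: "e \<subseteq> {0..<n}" "card e = 2" using assms(4) unfolding simple_graph_def by auto
    then obtain i j where ij: "e = {i,j}" "i \<noteq> j" by (meson card_2_iff)
    have "h i \<noteq> h j" "h i \<in> K" "h j \<in> K" using h ij e(1) unfolding bij_betw_def inj_on_def by auto
    then show "\<chi> (h ` e) = c" using assms(3) ij by auto
  qed
  moreover have "inj_on h {0..<n}" "h ` {0..<n} \<subseteq> {0..<N}" using h assms(1) unfolding bij_betw_def by auto
  ultimately show ?thesis unfolding has_mono_copy_def by (intro exI[of _ h] exI[of _ c]) simp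
qed

lemma arrow3_exists:
  assumes "simple_graph n E"
  shows "ramsey_arrow 3 (2^(n + 2^(n+n))) n E"
  unfolding ramsey_arrow_def
proof (intro allI impI)
  fix \<chi> assume col: "edge_colouring 3 (2^(n + 2^(n+n))) \<chi>"
  let ?N = "2^(n + 2^(n+n)) :: nat"
  have "(\<exists>K\<subseteq>{0..<?N}. card K = n \<and> (\<forall>u\<in>K. \<forall>w\<in>K. u\<noteq>w \<longrightarrow> \<chi>{u,w} = 0)) \<or>
    (\<exists>K\<subseteq>{0..<?N}. card K = 2^(n+n) \<and> (\<forall>u\<in>K. \<forall>w\<in>K. u\<noteq>w \<longrightarrow> \<not> \<chi>{u,w} = 0))"
    by (rule ramsey2) simp_all
  then show "has_mono_copy ?N \<chi> n E"
  proof
    assume "\<exists>K\<subseteq>{0..<?N}. card K = n \<and> (\<forall>u\<in>K. \<forall>w\<in>K. u\<noteq>w \<longrightarrow> \<chi>{u,w} = 0)"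
    then obtain K where "K\<subseteq>{0..<?N}" "card K = n" "\<forall>u\<in>K. \<forall>w\<in>K. u\<noteq>w \<longrightarrow> \<chi>{u,w} = 0" by blast
    then show ?thesis using clique_copy[of K ?N n \<chi> 0 E] assms by blast
  next
    assume "\<exists>K\<subseteq>{0..<?N}. card K = 2^(n+n) \<and> (\<forall>u\<in>K. \<forall>w\<in>K. u\<noteq>w \<longrightarrow> \<not> \<chi>{u,w} = 0)"
    then obtain K where K: "K\<subseteq>{0..<?N}" "card K = 2^(n+n)" "\<forall>u\<in>K. \<forall>w\<in>K. u\<noteq>w \<longrightarrow> \<not> \<chi>{u,w} = 0"
      by blast
    have "finite K" using K(1) finite_subset by blast
    have "(\<exists>K'\<subseteq>K. card K' = n \<and> (\<forall>u\<in>K'. \<forall>w\<in>K'. u\<noteq>w \<longrightarrow> \<chi>{u,w} = 1)) \<or>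
      (\<exists>K'\<subseteq>K. card K' = n \<and> (\<forall>u\<in>K'. \<forall>w\<in>K'. u\<noteq>w \<longrightarrow> \<not> \<chi>{u,w} = 1))"
      by (rule ramsey2) (use \<open>finite K\<close> K(2) in auto)
    then show ?thesis
    proof
      assume "\<exists>K'\<subseteq>K. card K' = n \<and> (\<forall>u\<in>K'. \<forall>w\<in>K'. u\<noteq>w \<longrightarrow> \<chi>{u,w} = 1)"
      then obtain K' where "K'\<subseteq>K" "card K' = n" "\<forall>u\<in>K'. \<forall>w\<in>K'. u\<noteq>w \<longrightarrow> \<chi>{u,w} = 1" by blast
      then show ?thesis using clique_copy[of K' ?N n \<chi> 1 E] assms K(1) by blast
    next
      assume "\<exists>K'\<subseteq>K. card K' = n \<and> (\<forall>u\<in>K'. \<forall>w\<in>K'. u\<noteq>w \<longrightarrow> \<not> \<chi>{u,w} = 1)"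
      then obtain K' where K': "K'\<subseteq>K" "card K' = n" "\<forall>u\<in>K'. \<forall>w\<in>K'. u\<noteq>w \<longrightarrow> \<not> \<chi>{u,w} = 1" by blast
      have "\<forall>u\<in>K'. \<forall>w\<in>K'. u\<noteq>w \<longrightarrow> \<chi>{u,w} = 2"
      proof (intro ballI impI)
        fix u w assume uw: "u \<in> K'" "w \<in> K'" "u \<noteq> w"
        have "{u,w} \<subseteq> {0..<?N}" using uw K(1) K'(1) by auto
        moreover have "card {u,w} = 2" using uw(3) by simp
        ultimately have "\<chi>{u,w} < 3" using col unfolding edge_colouring_def by blast
        moreover have "\<chi>{u,w} \<noteq> 0" "\<chi>{u,w} \<noteq> 1" using uw K(3) K'(1,3) by auto
        ultimately show "\<chi>{u,w} = 2" by linarith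
      qed
      then show ?thesis using clique_copy[of K' ?N n \<chi> 2 E] assms K(1) K'(1,2) by blast
    qed
  qed
qed

definition Eg :: "nat \<Rightarrow> nat \<Rightarrow> nat set set" where
  "Eg s l = {{i,j} | i j. i < j \<and> j < s} \<union> {{0,j} | j. 0 < j \<and> j < s + l}"

lemma Eg_simple: "s + l \<le> n \<Longrightarrow> simple_graph n (Eg s l)"
  unfolding simple_graph_def Eg_def by auto

lemma star_copy:
  assumes K: "K \<subseteq> {0..<N}" "card K = s" "\<forall>u\<in>K. \<forall>w\<in>K. u\<noteq>w \<longrightarrow> \<chi>{u,w} = c"
    and v: "v \<in> K"
    and rich: "card {w\<in>{0..<N}. w\<noteq>v \<and> \<chi>{v,w} = c} \<ge> s - 1 + l"
    and n: "N \<ge> n" "s + l \<le> n"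
  shows "has_mono_copy N \<chi> n (Eg s l)"
proof -
  define nb where "nb = {w\<in>{0..<N}. w\<noteq>v \<and> \<chi>{v,w} = c}"
  have fK: "finite K" using K(1) finite_subset by blast
  have s1: "s \<ge> 1" using v fK K(2) by (metis One_nat_def Suc_leI card_gt_0_iff empty_iff)
  have fnb: "finite nb" unfolding nb_def by auto
  have "nb \<inter> K \<subseteq> K - {v}" unfolding nb_def by auto
  then have "card (nb \<inter> K) \<le> s - 1" using fK K(2) v
    by (metis card_Diff_singleton card_mono finite_Diff)
  moreover have "card (nb - K) = card nb - card (nb \<inter> K)" using fnb by (simp add: card_Diff_subset_Int)
  ultimately have "card (nb - K) \<ge> l" using rich unfolding nb_def[symmetric] by linarith
  then obtain S where S: "S \<subseteq> nb - K" "card S = l" by (meson obtain_subset_with_card_n)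
  have fS: "finite S" using S(1) fnb finite_subset by blast
  have SV: "S \<subseteq> {0..<N}" using S(1) unfolding nb_def by auto
  have "K \<inter> S = {}" using S(1) by auto
  then have cKS: "card (K \<union> S) = s + l" using fK fS K(2) S(2) by (simp add: card_Un_disjoint)
  have "card ({0..<N} - (K \<union> S)) = N - (s + l)"
  proof -
    have "K \<union> S \<subseteq> {0..<N}" using K(1) SV by auto
    then have "card ({0..<N} - (K \<union> S)) = card {0..<N} - card (K \<union> S)"
      by (meson card_Diff_subset finite_Un fK fS)
    then show ?thesis using cKS by simp
  qed
  then have "card ({0..<N} - (K \<union> S)) \<ge> n - s - l" using n by linarith
  then obtain T where T: "T \<subseteq> {0..<N} - (K \<union> S)" "card T = n - s - l" by (meson obtain_subset_with_card_n)
  have fT: "finite T" using T(1) finite_subset by blast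
  define L1 where "L1 = v # sorted_list_of_set (K - {v})"
  define L2 where "L2 = sorted_list_of_set S @ sorted_list_of_set T"
  define xs where "xs = L1 @ L2"
  have setL1: "set L1 = K" unfolding L1_def using fK v by auto
  have lenL1: "length L1 = s" unfolding L1_def using fK v K(2) s1 by simp
  have dL1: "distinct L1" unfolding L1_def using fK by simp
  have setL2: "set L2 = S \<union> T" unfolding L2_def using fS fT by simp
  have dL2: "distinct L2" unfolding L2_def using fS fT T(1) by auto
  have lenL2: "length L2 = n - s" unfolding L2_def using S(2) T(2) n by simp
  have dxs: "distinct xs" unfolding xs_def using dL1 dL2 setL1 setL2 T(1) S(1) by auto
  have lenxs: "length xs = n" unfolding xs_def using lenL1 lenL2 n by simp
  have setxs: "set xs \<subseteq> {0..<N}" unfolding xs_def using setL1 setL2 K(1) SV T(1) by auto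
  have x0: "xs ! 0 = v" unfolding xs_def L1_def by simp
  have xK: "xs ! i \<in> K" if "i < s" for i
    using that lenL1 setL1 unfolding xs_def by (metis nth_append nth_mem)
  have xS: "xs ! j \<in> S" if "s \<le> j" "j < s + l" for j
  proof -
    have "xs ! j = L2 ! (j - s)" unfolding xs_def using that lenL1 by (simp add: nth_append)
    also have "\<dots> = sorted_list_of_set S ! (j - s)" unfolding L2_def using that fS S(2)
      by (simp add: nth_append)
    also have "\<dots> \<in> S" using that fS S(2) by (metis add_diff_inverse_nat diff_less_mono distinct_card
       distinct_sorted_list_of_set less_diff_conv2 nat_add_left_cancel_less not_less nth_mem
       set_sorted_list_of_set)
    finally show ?thesis .
  qed
  have inj: "inj_on (nth xs) {0..<n}" using dxs lenxs by (intro inj_on_nth) auto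
  have img: "nth xs ` {0..<n} \<subseteq> {0..<N}" using setxs lenxs nth_mem by fastforce
  have "\<forall>e\<in>Eg s l. \<chi> (nth xs ` e) = c"
  proof
    fix e assume "e \<in> Eg s l"
    then consider (a) i j where "e = {i,j}" "i < j" "j < s" | (b) j where "e = {0,j}" "0 < j" "j < s + l"
      unfolding Eg_def by blast
    then show "\<chi> (nth xs ` e) = c"
    proof cases
      case a
      then have "xs ! i \<noteq> xs ! j" using dxs lenxs n by (simp add: nth_eq_iff_index_eq)
      then show ?thesis using a xK K(3) by auto
    next
      case b
      show ?thesis
      proof (cases "j < s")
        case True
        then have "xs ! 0 \<noteq> xs ! j" using b dxs lenxs n by (simp add: nth_eq_iff_index_eq)
        then show ?thesis using b xK K(3) True x0 v by auto
      next
        case False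
        then have "xs ! j \<in> S" using xS b by simp
        then have "xs ! j \<in> nb" using S(1) by blast
        then show ?thesis using b x0 unfolding nb_def by auto
      qed
    qed
  qed
  then show ?thesis unfolding has_mono_copy_def using inj img by (intro exI[of _ "nth xs"] exI[of _ c]) simp
qed

lemma upper:
  assumes s1: "1 \<le> s" and sl: "s + l \<le> n"
    and N: "N \<ge> n + 3*(s*(s+l) + 2^(s+s)) + 2*(s+l)"
  shows "ramsey_arrow 2 N n (Eg s l)"
  unfolding ramsey_arrow_def
proof (intro allI impI)
  fix \<chi> assume col: "edge_colouring 2 N \<chi>"
  define V where "V = {0..<N}"
  define D where "D = s - 1 + l"
  define Q where "Q = s*(D+1) + 2^(s+s)"
  define nb where "nb c v = {w\<in>V. w\<noteq>v \<and> \<chi>{v,w} = c}" for c v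
  have c2: "\<chi>{u,w} = 0 \<or> \<chi>{u,w} = 1" if "u \<in> V" "w \<in> V" "u \<noteq> w" for u w
  proof -
    have "{u,w} \<subseteq> {0..<N}" "card {u,w} = 2" using that unfolding V_def by auto
    then have "\<chi>{u,w} < 2" using col unfolding edge_colouring_def by blast
    then show ?thesis by linarith
  qed
  have fnb: "finite (nb c v)" for c v unfolding nb_def V_def by auto
  have sumnb: "card (nb 0 v) + card (nb 1 v) = N - 1" if "v \<in> V" for v
  proof -
    have "nb 0 v \<union> nb 1 v = V - {v}" using c2 that unfolding nb_def by auto
    moreover have "nb 0 v \<inter> nb 1 v = {}" unfolding nb_def by auto
    ultimately have "card (nb 0 v) + card (nb 1 v) = card (V - {v})"
      using card_Un_disjoint[OF fnb fnb] by metis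
    then show ?thesis using that unfolding V_def by simp
  qed
  have DQ: "D + 1 = s + l" "N \<ge> 3 * Q + 2 * D" using s1 N unfolding D_def Q_def by auto
  define R1 where "R1 = {v\<in>V. card (nb 0 v) \<ge> D \<and> card (nb 1 v) < D}"
  define B1 where "B1 = {v\<in>V. card (nb 1 v) \<ge> D \<and> card (nb 0 v) < D}"
  define RB where "RB = {v\<in>V. card (nb 0 v) \<ge> D \<and> card (nb 1 v) \<ge> D}"
  have "V \<subseteq> R1 \<union> B1 \<union> RB"
  proof
    fix v assume "v \<in> V"
    have "Q \<ge> 1" unfolding Q_def using s1 by simp
    then have "card (nb 0 v) + card (nb 1 v) \<ge> 2 * D" using sumnb[OF \<open>v \<in> V\<close>] DQ by linarith
    then have "card (nb 0 v) \<ge> D \<or> card (nb 1 v) \<ge> D" by linarith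
    then show "v \<in> R1 \<union> B1 \<union> RB" using \<open>v \<in> V\<close> unfolding R1_def B1_def RB_def by auto
  qed
  moreover have fin: "finite R1" "finite B1" "finite RB" unfolding R1_def B1_def RB_def V_def by auto
  ultimately have "card V \<le> card (R1 \<union> B1 \<union> RB)" by (intro card_mono) auto
  also have "\<dots> \<le> card (R1 \<union> B1) + card RB" by (rule card_Un_le)
  also have "\<dots> \<le> card R1 + card B1 + card RB" using card_Un_le[of R1 B1] by simp
  finally have "card V \<le> card R1 + card B1 + card RB" .
  moreover have "card V = N" unfolding V_def by simp
  ultimately have "card R1 \<ge> Q \<or> card B1 \<ge> Q \<or> card RB \<ge> Q" using DQ by linarith
  moreover have copy: "has_mono_copy N \<chi> n (Eg s l)"
    if "K \<subseteq> V" "card K = s" "\<forall>u\<in>K. \<forall>w\<in>K. u\<noteq>w \<longrightarrow> \<chi>{u,w} = c" "v \<in> K" "card (nb c v) \<ge> D"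
    for K c v
    using star_copy[of K N s \<chi> c v l n] that N sl unfolding nb_def D_def V_def by auto
  moreover have "K \<noteq> {}" if "card K = s" for K :: "nat set" using that s1 by auto
  ultimately show "has_mono_copy N \<chi> n (Eg s l)"
  proof (elim disjE)
    assume "card RB \<ge> Q"
    then have "card RB \<ge> 2^(s+s)" unfolding Q_def by linarith
    then have "(\<exists>K\<subseteq>RB. card K = s \<and> (\<forall>u\<in>K. \<forall>w\<in>K. u\<noteq>w \<longrightarrow> \<chi>{u,w} = 0)) \<or>
      (\<exists>K\<subseteq>RB. card K = s \<and> (\<forall>u\<in>K. \<forall>w\<in>K. u\<noteq>w \<longrightarrow> \<not> \<chi>{u,w} = 0))"
      using ramsey2[of RB s s "\<lambda>e. \<chi> e = 0"] fin(3) by simp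
    then show ?thesis
    proof
      assume "\<exists>K\<subseteq>RB. card K = s \<and> (\<forall>u\<in>K. \<forall>w\<in>K. u\<noteq>w \<longrightarrow> \<chi>{u,w} = 0)"
      then obtain K where K: "K\<subseteq>RB" "card K = s" "\<forall>u\<in>K. \<forall>w\<in>K. u\<noteq>w \<longrightarrow> \<chi>{u,w} = 0" by blast
      then obtain v where "v \<in> K" using s1 by fastforce
      moreover have "K \<subseteq> V" using K(1) unfolding RB_def by auto
      moreover have "card (nb 0 v) \<ge> D" using K(1) \<open>v\<in>K\<close> unfolding RB_def by auto
      ultimately show ?thesis using copy K by blast
    next
      assume "\<exists>K\<subseteq>RB. card K = s \<and> (\<forall>u\<in>K. \<forall>w\<in>K. u\<noteq>w \<longrightarrow> \<not> \<chi>{u,w} = 0)"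
      then obtain K where K: "K\<subseteq>RB" "card K = s" "\<forall>u\<in>K. \<forall>w\<in>K. u\<noteq>w \<longrightarrow> \<not> \<chi>{u,w} = 0" by blast
      then obtain v where "v \<in> K" using s1 by fastforce
      moreover have KV: "K \<subseteq> V" using K(1) unfolding RB_def by auto
      moreover have "card (nb 1 v) \<ge> D" using K(1) \<open>v\<in>K\<close> unfolding RB_def by auto
      moreover have "\<forall>u\<in>K. \<forall>w\<in>K. u\<noteq>w \<longrightarrow> \<chi>{u,w} = 1"
      proof (intro ballI impI)
        fix u w assume "u \<in> K" "w \<in> K" "u \<noteq> w"
        then have "u \<in> V" "w \<in> V" "\<chi>{u,w} \<noteq> 0" using K(3) KV by auto
        then show "\<chi>{u,w} = 1" using c2[of u w] \<open>u \<noteq> w\<close> by auto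
      qed
      ultimately show ?thesis using copy K(2) by blast
    qed
  next
    assume "card R1 \<ge> Q"
    then have cR: "card R1 \<ge> s*(D+1)" unfolding Q_def by linarith
    have "\<forall>v\<in>R1. card {w\<in>R1. w\<noteq>v \<and> \<not> \<chi>{v,w} = 0} \<le> D"
    proof
      fix v assume v: "v \<in> R1"
      have "{w\<in>R1. w\<noteq>v \<and> \<not> \<chi>{v,w} = 0} \<subseteq> nb 1 v"
      proof
        fix w assume w: "w \<in> {w\<in>R1. w\<noteq>v \<and> \<not> \<chi>{v,w} = 0}"
        then have "w \<in> V" "v \<in> V" "w \<noteq> v" "\<not> \<chi>{v,w} = 0" using v unfolding R1_def by auto
        then show "w \<in> nb 1 v" using c2[of v w] unfolding nb_def by auto
      qed
      then have "card {w\<in>R1. w\<noteq>v \<and> \<not> \<chi>{v,w} = 0} \<le> card (nb 1 v)" using fnb card_mono by blast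
      then show "card {w\<in>R1. w\<noteq>v \<and> \<not> \<chi>{v,w} = 0} \<le> D" using v unfolding R1_def by auto
    qed
    then obtain K where K: "K\<subseteq>R1" "card K = s" "\<forall>u\<in>K. \<forall>w\<in>K. u\<noteq>w \<longrightarrow> \<chi>{u,w} = 0"
      using greedy[OF fin(1) cR, of "\<lambda>e. \<chi> e = 0"] by blast
    then obtain v where "v \<in> K" using s1 by fastforce
    moreover have "K \<subseteq> V" using K(1) unfolding R1_def by auto
    moreover have "card (nb 0 v) \<ge> D" using K(1) \<open>v\<in>K\<close> unfolding R1_def by auto
    ultimately show ?thesis using copy K by blast
  next
    assume "card B1 \<ge> Q"
    then have cR: "card B1 \<ge> s*(D+1)" unfolding Q_def by linarith
    have "\<forall>v\<in>B1. card {w\<in>B1. w\<noteq>v \<and> \<not> \<chi>{v,w} = 1} \<le> D"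
    proof
      fix v assume v: "v \<in> B1"
      have "{w\<in>B1. w\<noteq>v \<and> \<not> \<chi>{v,w} = 1} \<subseteq> nb 0 v"
      proof
        fix w assume w: "w \<in> {w\<in>B1. w\<noteq>v \<and> \<not> \<chi>{v,w} = 1}"
        then have "w \<in> V" "v \<in> V" "w \<noteq> v" "\<not> \<chi>{v,w} = 1" using v unfolding B1_def by auto
        then show "w \<in> nb 0 v" using c2[of v w] unfolding nb_def by auto
      qed
      then have "card {w\<in>B1. w\<noteq>v \<and> \<not> \<chi>{v,w} = 1} \<le> card (nb 0 v)" using fnb card_mono by blast
      then show "card {w\<in>B1. w\<noteq>v \<and> \<not> \<chi>{v,w} = 1} \<le> D" using v unfolding B1_def by auto
    qed
    then obtain K where K: "K\<subseteq>B1" "card K = s" "\<forall>u\<in>K. \<forall>w\<in>K. u\<noteq>w \<longrightarrow> \<chi>{u,w} = 1"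
      using greedy[OF fin(2) cR, of "\<lambda>e. \<chi> e = 1"] by blast
    then obtain v where "v \<in> K" using s1 by fastforce
    moreover have "K \<subseteq> V" using K(1) unfolding B1_def by auto
    moreover have "card (nb 1 v) \<ge> D" using K(1) \<open>v\<in>K\<close> unfolding B1_def by auto
    ultimately show ?thesis using copy K by blast
  qed
qed

definition colL :: "nat \<Rightarrow> nat \<Rightarrow> nat \<Rightarrow> nat \<Rightarrow> nat" where
  "colL k m x y = (if x div m = y div m then 0 else if (x div m) mod k = (y div m) mod k then 1 else 2)"

lemma colL_sym: "colL k m x y = colL k m y x"
  unfolding colL_def by auto

lemma colL_pair: "colL k m (Min {x,y}) (Max {x,y}) = colL k m x y"
proof (cases "x \<le> y")
  case True
  then show ?thesis by (simp add: min_def max_def)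
next
  case False
  then show ?thesis by (simp add: min_def max_def colL_sym)
qed

lemma lower:
  assumes s2: "2 \<le> s" and sl: "s + l \<le> n"
  shows "\<not> ramsey_arrow 3 ((s-1)*(s-1)*(s+l-1)) n (Eg s l)"
proof
  define k where "k = s - 1"
  define m where "m = s + l - 1"
  define M where "M = k*k*m"
  define \<chi> where "\<chi> e = colL k m (Min e) (Max e)" for e
  have k1: "k \<ge> 1" "m \<ge> 1" "s = k + 1" unfolding k_def m_def using s2 by auto
  have chi: "\<chi> {x,y} = colL k m x y" for x y unfolding \<chi>_def by (rule colL_pair)
  assume "ramsey_arrow 3 ((s-1)*(s-1)*(s+l-1)) n (Eg s l)"
  moreover have "edge_colouring 3 M \<chi>" unfolding edge_colouring_def \<chi>_def colL_def by auto
  ultimately have "has_mono_copy M \<chi> n (Eg s l)" unfolding ramsey_arrow_def M_def k_def m_def by blast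
  then obtain f c where f: "inj_on f {0..<n}" "f ` {0..<n} \<subseteq> {0..<M}" "\<forall>e\<in>Eg s l. \<chi> (f ` e) = c"
    unfolding has_mono_copy_def by blast
  have E1: "colL k m (f 0) (f j) = c" if "0 < j" "j < s + l" for j
  proof -
    have "{0,j} \<in> Eg s l" unfolding Eg_def using that by blast
    then have "\<chi> (f ` {0,j}) = c" using f(3) by blast
    then show ?thesis using chi by simp
  qed
  have E2: "colL k m (f i) (f j) = c" if "i < j" "j < s" for i j
  proof -
    have "{i,j} \<in> Eg s l" unfolding Eg_def using that by blast
    then have "\<chi> (f ` {i,j}) = c" using f(3) by blast
    then show ?thesis using chi by simp
  qed
  have E2': "colL k m (f i) (f j) = c" if "i \<noteq> j" "i < s" "j < s" for i j
    using that E2 colL_sym by (metis linorder_neqE_nat)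
  have fM: "f i < M" if "i < n" for i
  proof -
    have "f i \<in> f ` {0..<n}" using that by simp
    then show ?thesis using f(2) by auto
  qed
  have c01: "c = colL k m (f 0) (f 1)" using E1[of 1] s2 by simp
  have inj_sl: "inj_on f {0..<s+l}" by (rule inj_on_subset[OF f(1)]) (use sl in auto)
  have "c \<le> 2" using c01 unfolding colL_def by auto
  then consider "c = 0" | "c = 1" | "c = 2" by linarith
  then show False
  proof cases
    case 1
    define q where "q = f 0 div m"
    have "f ` {0..<s+l} \<subseteq> {q*m..<q*m+m}"
    proof
      fix x assume "x \<in> f ` {0..<s+l}"
      then obtain j where j: "j < s + l" "x = f j" by auto
      have "f j div m = q"
      proof (cases "j = 0")
        case True then show ?thesis unfolding q_def by simp
      next
        case False
        then have "colL k m (f 0) (f j) = 0" using E1[of j] j 1 by simp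
        then show ?thesis unfolding q_def colL_def by (auto split: if_splits)
      qed
      moreover have "f j div m * m + f j mod m = f j" by (rule div_mult_mod_eq)
      moreover have "f j mod m < m" using k1(2) by simp
      ultimately have "q*m + f j mod m = f j" "f j mod m < m" by simp_all
      then have "q*m \<le> f j" "f j < q*m + m" by linarith+
      then show "x \<in> {q*m..<q*m+m}" using j by simp
    qed
    then have "card {0..<s+l} \<le> card {q*m..<q*m+m}" using inj_sl by (intro card_inj_on_le) auto
    then show False unfolding m_def using s2 by simp
  next
    case 2
    define a where "a x = (x div m) mod k" for x
    define g where "g i = (f i div m) div k" for i
    have aeq: "a (f i) = a (f 0)" if "i < s" for i
    proof (cases "i = 0")
      case False
      then have "colL k m (f 0) (f i) = 1" using E1[of i] that 2 by simp
      then show ?thesis unfolding a_def colL_def by (auto split: if_splits)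
    qed simp
    have "inj_on g {0..<s}"
    proof (rule inj_onI, rule ccontr)
      fix i j assume ij: "i \<in> {0..<s}" "j \<in> {0..<s}" "g i = g j" "i \<noteq> j"
      then have "colL k m (f i) (f j) = 1" using E2'[of i j] 2 by simp
      then have "f i div m \<noteq> f j div m" unfolding colL_def by (auto split: if_splits)
      moreover have "(f i div m) mod k = (f j div m) mod k" using aeq[of i] aeq[of j] ij unfolding a_def by simp
      moreover have "(f i div m) div k = (f j div m) div k" using ij(3) unfolding g_def .
      moreover have "(f i div m) div k * k + (f i div m) mod k = f i div m" by (rule div_mult_mod_eq)
      moreover have "(f j div m) div k * k + (f j div m) mod k = f j div m" by (rule div_mult_mod_eq)
      ultimately show False by simp
    qed
    moreover have "g ` {0..<s} \<subseteq> {0..<k}"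
    proof
      fix x assume "x \<in> g ` {0..<s}"
      then obtain i where i: "i < s" "x = g i" by auto
      have "f i < (k*k)*m" using fM[of i] i sl unfolding M_def by simp
      then have "f i div m < k*k" by (rule less_mult_imp_div_less)
      then have "f i div m div k < k" using less_mult_imp_div_less[of "f i div m" k k] by simp
      then show "x \<in> {0..<k}" using i unfolding g_def by simp
    qed
    ultimately have "card {0..<s} \<le> card {0..<k}" by (intro card_inj_on_le) auto
    then show False using k1 by simp
  next
    case 3
    define a where "a x = (x div m) mod k" for x
    have "inj_on (\<lambda>i. a (f i)) {0..<s}"
    proof (rule inj_onI, rule ccontr)
      fix i j assume ij: "i \<in> {0..<s}" "j \<in> {0..<s}" "a (f i) = a (f j)" "i \<noteq> j"
      then have "colL k m (f i) (f j) = 2" using E2'[of i j] 3 by simp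
      then show False using ij(3) unfolding a_def colL_def by (auto split: if_splits)
    qed
    moreover have "(\<lambda>i. a (f i)) ` {0..<s} \<subseteq> {0..<k}" unfolding a_def using k1 by auto
    ultimately have "card {0..<s} \<le> card {0..<k}" by (intro card_inj_on_le) auto
    then show False using k1 by simp
  qed
qed

lemma R2_le:
  assumes "1 \<le> s" "s + l \<le> n"
  shows "ramsey_number 2 n (Eg s l) \<le> n + 3*(s*(s+l) + 2^(s+s)) + 2*(s+l)"
  unfolding ramsey_number_def by (rule Least_le, rule upper) (use assms in auto)

lemma R3_gt:
  assumes "2 \<le> s" "s + l \<le> n"
  shows "ramsey_number 3 n (Eg s l) > (s-1)*(s-1)*(s+l-1)"
proof (rule ccontr)
  let ?P = "\<lambda>N. ramsey_arrow 3 N n (Eg s l)"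
  assume "\<not> ?thesis"
  then have le: "(LEAST N. ?P N) \<le> (s-1)*(s-1)*(s+l-1)" unfolding ramsey_number_def by simp
  have "?P (2^(n + 2^(n+n)))" using arrow3_exists Eg_simple assms(2) by blast
  then have "?P (LEAST N. ?P N)" by (rule LeastI)
  then have "?P ((s-1)*(s-1)*(s+l-1))" using le by (rule arrow_mono)
  then show False using lower assms by blast
qed

definition s_of :: "nat \<Rightarrow> nat" where "s_of n = nat \<lfloor>log 4 (real n)\<rfloor>"
definition G :: "nat \<Rightarrow> nat set set" where
  "G n = (if 2 \<le> s_of n then Eg (s_of n) (n div s_of n) else {})"

lemma s_of_real: "n \<ge> 1 \<Longrightarrow> real (s_of n) = of_int \<lfloor>log 4 (real n)\<rfloor> \<and> log 4 (real n) \<ge> 0"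
proof -
  assume n: "n \<ge> 1"
  have "log 4 (real n) \<ge> 0" using n by simp
  then show ?thesis unfolding s_of_def by simp
qed

lemma s_of_pow: "n \<ge> 1 \<Longrightarrow> 2^(s_of n + s_of n) \<le> n"
proof -
  assume n: "n \<ge> 1"
  have "real (s_of n) \<le> log 4 (real n)" using s_of_real[OF n] by linarith
  then have "4 powr real (s_of n) \<le> real n" using n by (subst le_log_iff[symmetric]) auto
  then have "real (4^(s_of n)) \<le> real n" by (simp add: powr_realpow)
  then have "4^(s_of n) \<le> n" by linarith
  moreover have "(2::nat)^(s_of n + s_of n) = 4^(s_of n)"
    by (simp add: power_add power_mult_distrib[symmetric])
  ultimately show ?thesis by simp
qed

lemma s_of_lower: "n \<ge> 1 \<Longrightarrow> real (s_of n) > log 4 (real n) - 1"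
proof -
  assume n: "n \<ge> 1"
  have "log 4 (real n) < of_int (\<lfloor>log 4 (real n)\<rfloor> + 1)" using floor_correct by blast
  then show ?thesis using s_of_real[OF n] by simp
qed

lemma s_of_ge: "n \<ge> 4^k \<Longrightarrow> s_of n \<ge> k"
proof -
  assume n: "n \<ge> 4^k"
  then have n1: "n \<ge> 1" by (metis le_trans one_le_numeral one_le_power)
  have "real (4^k) \<le> real n" using n by linarith
  then have "4 powr real k \<le> real n" by (simp add: powr_realpow)
  then have "real k \<le> log 4 (real n)" using n1 by (subst le_log_iff) auto
  then have "int k \<le> \<lfloor>log 4 (real n)\<rfloor>" by (simp add: le_floor_iff)
  then have "real k \<le> real (s_of n)" using s_of_real[OF n1] by (metis of_int_le_iff of_int_of_nat_eq)
  then show ?thesis by simp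
qed

lemma params:
  assumes "2 \<le> s" "2^(s+s) \<le> n"
  shows "s*s \<le> n" "s + n div s \<le> n" "s * (n div s) \<le> n" "2*s \<le> n"
proof -
  have "s < 2^s" by (rule less_exp)
  then have "s*s < 2^s*2^s" by (intro mult_strict_mono) auto
  then show ss: "s*s \<le> n" using assms by (simp add: power_add)
  show "s * (n div s) \<le> n" by (metis mult.commute div_times_less_eq_dividend)
  have "2*s \<le> s*s" using assms(1) by simp
  then show "2*s \<le> n" using ss by linarith
  then have "s \<le> n div 2" by linarith
  moreover have "n div s \<le> n div 2" by (intro div_le_mono2) (use assms in auto)
  ultimately show "s + n div s \<le> n" by linarith
qed

lemma s_of_0: "s_of 0 = 0" unfolding s_of_def log_def by simp

lemma G_simple: "simple_graph n (G n)"
proof (cases "2 \<le> s_of n")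
  case True
  then have "n \<ge> 1" using s_of_0 by (cases n) auto
  then have "s_of n + n div s_of n \<le> n" using params(2)[OF True s_of_pow] by blast
  then show ?thesis unfolding G_def using True Eg_simple by simp
next
  case False
  then show ?thesis unfolding G_def simple_graph_def by simp
qed

lemma R2_bound: "n \<ge> 16 \<Longrightarrow> ramsey_number 2 n (G n) \<le> 12 * n"
proof -
  assume n: "n \<ge> 16"
  define s where "s = s_of n"
  have s2: "2 \<le> s" unfolding s_def using s_of_ge[of 2 n] n by simp
  have pw: "2^(s+s) \<le> n" unfolding s_def using s_of_pow n by simp
  note p = params[OF s2 pw]
  have "ramsey_number 2 n (G n) \<le> n + 3*(s*(s+n div s) + 2^(s+s)) + 2*(s+n div s)"
    unfolding G_def s_def[symmetric] using s2 p(2) R2_le[of s "n div s" n] by simp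
  also have "s*(s+n div s) = s*s + s*(n div s)" by (simp add: algebra_simps)
  finally have "ramsey_number 2 n (G n) \<le> n + 3 * (s * s + s * (n div s) + 2 ^ (s + s)) + 2 * (s + n div s)" .
  moreover have "R \<le> n + 3*(a+b+c) + 2*d \<Longrightarrow> a \<le> n \<Longrightarrow> b \<le> n \<Longrightarrow> c \<le> n \<Longrightarrow> d \<le> n \<Longrightarrow> R \<le> 12*n"
    for R a b c d :: nat by (simp add: algebra_simps)
  ultimately show ?thesis using p pw by blast
qed

lemma R3_bound:
  assumes n: "n \<ge> 256"
  shows "real (ramsey_number 3 n (G n)) \<ge> (1 / (8 * ln 4)) * (real n * ln (real n))"
proof -
  define s where "s = s_of n"
  define l where "l = n div s"
  have s4: "4 \<le> s" unfolding s_def using s_of_ge[of 4 n] n by simp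
  have pw: "2^(s+s) \<le> n" unfolding s_def using s_of_pow n by simp
  note p = params[OF _ pw]
  have "ramsey_number 3 n (G n) > (s-1)*(s-1)*(s+l-1)"
    unfolding G_def s_def[symmetric] l_def using s4 p(2) R3_gt[of s "n div s" n] by simp
  moreover have "(s-1)*(s-1)*l \<le> (s-1)*(s-1)*(s+l-1)" using s4 by simp
  ultimately have R0: "real ((s-1)*(s-1)*l) \<le> real (ramsey_number 3 n (G n))" by linarith
  have "real (s-1) = real s - 1" using s4 by simp
  then have "real ((s-1)*(s-1)*l) = (real s - 1)^2 * real l" by (simp add: power2_eq_square)
  with R0 have R: "(real s - 1)^2 * real l \<le> real (ramsey_number 3 n (G n))" by (simp only:)
  have "l * s + n mod s = n" unfolding l_def by simp
  moreover have "n mod s < s" using s4 by simp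
  ultimately have "real l * real s \<ge> real n - real s" by (metis (mono_tags, opaque_lifting) add_less_cancel_left
      diff_le_eq less_imp_le of_nat_add of_nat_less_iff of_nat_mult)
  moreover have "real n \<ge> 2 * real s" using p(4) s4 by linarith
  ultimately have ls: "real l * real s \<ge> real n / 2" by linarith
  have ss: "(real s - 1)^2 \<ge> real s / 2 * real s" using s4
  proof -
    have "(real s - 1)^2 - real s / 2 * real s = (real s - 2)^2 / 2 - 1" by (simp add: power2_eq_square algebra_simps)
    moreover have "(real s - 2)^2 \<ge> 2^2" using s4 by (intro power_mono) auto
    ultimately show ?thesis by simp
  qed
  have "real s / 2 * (real n / 2) \<le> real s / 2 * (real l * real s)" using ls by (intro mult_left_mono) auto
  also have "\<dots> = (real s / 2 * real s) * real l" by simp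
  also have "\<dots> \<le> (real s - 1)^2 * real l" using ss by (intro mult_right_mono) auto
  finally have A: "real s * real n / 4 \<le> real (ramsey_number 3 n (G n))" using R by simp
  have "real s > log 4 (real n) - 1" unfolding s_def using s_of_lower n by simp
  then have "2 * real s > log 4 (real n)" using s4 by linarith
  then have B: "real s \<ge> ln (real n) / (2 * ln 4)" unfolding log_def by (simp add: field_simps)
  have "(1 / (8 * ln 4)) * (real n * ln (real n)) = (ln (real n) / (2 * ln 4)) * real n / 4"
    by (simp add: field_simps)
  also have "\<dots> \<le> real s * real n / 4" using B by (intro divide_right_mono mult_right_mono) auto
  finally show ?thesis using A by linarith
qed

theorem theorem1p3:
  shows "\<exists>G :: nat \<Rightarrow> nat set set.
           (\<forall>n. simple_graph n (G n)) \<and>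
           (\<lambda>n. real (ramsey_number 2 n (G n))) \<in> O(\<lambda>n. real n) \<and>
           (\<lambda>n. real (ramsey_number 3 n (G n))) \<in> \<Omega>(\<lambda>n. real n * ln (real n))"
proof (intro exI[of _ G] conjI allI)
  show "simple_graph n (G n)" for n by (rule G_simple)
  have "eventually (\<lambda>n. norm (real (ramsey_number 2 n (G n))) \<le> 12 * norm (real n)) at_top"
    unfolding eventually_at_top_linorder
  proof (intro exI[of _ 16] allI impI)
    fix n :: nat assume "16 \<le> n"
    then have "ramsey_number 2 n (G n) \<le> 12 * n" by (rule R2_bound)
    then show "norm (real (ramsey_number 2 n (G n))) \<le> 12 * norm (real n)" by simp
  qed
  then show "(\<lambda>n. real (ramsey_number 2 n (G n))) \<in> O(\<lambda>n. real n)" by (rule bigoI)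
  have "eventually (\<lambda>n. norm (real (ramsey_number 3 n (G n))) \<ge> (1 / (8 * ln 4)) * norm (real n * ln (real n))) at_top"
    unfolding eventually_at_top_linorder
  proof (intro exI[of _ 256] allI impI)
    fix n :: nat assume n: "256 \<le> n"
    then have "ln (real n) \<ge> 0" by simp
    then have "norm (real n * ln (real n)) = real n * ln (real n)" by simp
    then show "norm (real (ramsey_number 3 n (G n))) \<ge> (1 / (8 * ln 4)) * norm (real n * ln (real n))"
      using R3_bound[OF n] by simp
  qed
  then show "(\<lambda>n. real (ramsey_number 3 n (G n))) \<in> \<Omega>(\<lambda>n. real n * ln (real n))"
    by (intro landau_omega.bigI[of "1 / (8 * ln 4)"]) auto
qed

end
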